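(* Let $n\equiv 9\pmod{12}$. (1) If there exists an $\mathrm{LKTS}(n)$, then there exists a $\mathrm{TOC}_3(n,5,3)$. (2) If there exists an $\mathrm{OLKTS}(n)$, then there exists a $\mathrm{TOC}_3(n+1,5,3)$.
   Context: $\mathcal{H}_q(n,w)$ is the set of all words of length $n$ over $\mathbb{Z}_q$ with exactly $w$ nonzero entries, with the Hamming distance. An $(n,d,w)_q$-code is a nonempty subset of $\mathcal{H}_q(n,w)$ in which any two distinct words have Hamming distance at least $d$; $A_q(n,d,w)$ is the maximum size of such a code and a code of this size is optimal. A $\mathrm{TOC}_q(n,d,w)$ is a partition of $\mathcal{H}_q(n,w)$ into mutually disjoint optimal $(n,d,w)_q$-codes. A Kirkman triple system $\mathrm{KTS}(n)$ is a Steiner triple system on an $n$-set (a family of 3-subsets such that every pair lies in exactly one of them) whose triples can be partitioned into parallel classes, each partitioning the point set. A large set $\mathrm{LKTS}(n)$ is a partition of all 3-subsets of an $n$-set into block sets of $\mathrm{KTS}(n)$'s on that set. An overlarge set $\mathrm{OLKTS}(n)$ is a partition of all 3-subsets of an $(n+1)$-set $X$ into block sets $\mathcal{B}_x$, $x\in X$, such that each $(X\setminus\{x\},\mathcal{B}_x)$ is a $\mathrm{KTS}(n)$. *)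

theory Defs
  imports Main
begin

definition words :: "nat \<Rightarrow> nat \<Rightarrow> (nat \<Rightarrow> nat) set" where
  "words q n = {x. (\<forall>i<n. x i < q) \<and> (\<forall>i\<ge>n. x i = 0)}"

definition supp :: "(nat \<Rightarrow> nat) \<Rightarrow> nat set" where
  "supp x = {i. x i \<noteq> 0}"

definition Hq :: "nat \<Rightarrow> nat \<Rightarrow> nat \<Rightarrow> (nat \<Rightarrow> nat) set" where
  "Hq q n w = {x \<in> words q n. card (supp x) = w}"

definition hdist :: "nat \<Rightarrow> (nat \<Rightarrow> nat) \<Rightarrow> (nat \<Rightarrow> nat) \<Rightarrow> nat" where
  "hdist n x y = card {i. i < n \<and> x i \<noteq> y i}"

definition is_code :: "nat \<Rightarrow> nat \<Rightarrow> nat \<Rightarrow> nat \<Rightarrow> (nat \<Rightarrow> nat) set \<Rightarrow> bool" where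
  "is_code q n d w C \<longleftrightarrow> C \<noteq> {} \<and> C \<subseteq> Hq q n w \<and>
     (\<forall>x\<in>C. \<forall>y\<in>C. x \<noteq> y \<longrightarrow> d \<le> hdist n x y)"

definition Aq :: "nat \<Rightarrow> nat \<Rightarrow> nat \<Rightarrow> nat \<Rightarrow> nat" where
  "Aq q n d w = Max {card C | C. is_code q n d w C}"

definition optimal_code :: "nat \<Rightarrow> nat \<Rightarrow> nat \<Rightarrow> nat \<Rightarrow> (nat \<Rightarrow> nat) set \<Rightarrow> bool" where
  "optimal_code q n d w C \<longleftrightarrow> is_code q n d w C \<and> card C = Aq q n d w"

definition is_TOC :: "nat \<Rightarrow> nat \<Rightarrow> nat \<Rightarrow> nat \<Rightarrow> (nat \<Rightarrow> nat) set set \<Rightarrow> bool" where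
  "is_TOC q n d w P \<longleftrightarrow> (\<forall>C\<in>P. optimal_code q n d w C) \<and> \<Union>P = Hq q n w \<and>
     (\<forall>C\<in>P. \<forall>D\<in>P. C \<noteq> D \<longrightarrow> C \<inter> D = {})"

definition triples :: "'a set \<Rightarrow> 'a set set" where
  "triples X = {T. T \<subseteq> X \<and> card T = 3}"

definition is_STS :: "'a set \<Rightarrow> 'a set set \<Rightarrow> bool" where
  "is_STS X B \<longleftrightarrow> finite X \<and> B \<subseteq> triples X \<and>
     (\<forall>x\<in>X. \<forall>y\<in>X. x \<noteq> y \<longrightarrow> (\<exists>!T. T \<in> B \<and> {x, y} \<subseteq> T))"

definition parallel_class :: "'a set \<Rightarrow> 'a set set \<Rightarrow> bool" where
  "parallel_class X P \<longleftrightarrow> \<Union>P = X \<and> (\<forall>S\<in>P. \<forall>T\<in>P. S \<noteq> T \<longrightarrow> S \<inter> T = {})"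

definition is_KTS :: "'a set \<Rightarrow> 'a set set \<Rightarrow> bool" where
  "is_KTS X B \<longleftrightarrow> is_STS X B \<and>
     (\<exists>R. \<Union>R = B \<and> (\<forall>P\<in>R. \<forall>Q\<in>R. P \<noteq> Q \<longrightarrow> P \<inter> Q = {}) \<and>
          (\<forall>P\<in>R. parallel_class X P))"

definition exists_LKTS :: "nat \<Rightarrow> bool" where
  "exists_LKTS n \<longleftrightarrow> (\<exists>(X::nat set) L. finite X \<and> card X = n \<and>
     \<Union>L = triples X \<and> (\<forall>B\<in>L. \<forall>B'\<in>L. B \<noteq> B' \<longrightarrow> B \<inter> B' = {}) \<and>
     (\<forall>B\<in>L. is_KTS X B))"

definition exists_OLKTS :: "nat \<Rightarrow> bool" where
  "exists_OLKTS n \<longleftrightarrow> (\<exists>(X::nat set) (\<B>::nat \<Rightarrow> nat set set). finite X \<and> card X = n + 1 \<and>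
     (\<Union>x\<in>X. \<B> x) = triples X \<and>
     (\<forall>x\<in>X. \<forall>y\<in>X. x \<noteq> y \<longrightarrow> \<B> x \<inter> \<B> y = {}) \<and>
     (\<forall>x\<in>X. is_KTS (X - {x}) (\<B> x)))"

end

theory Submission
  imports Defs
begin

definition ell :: "nat \<Rightarrow> nat \<Rightarrow> nat" where
 "ell c k = (c mod 2 * (k mod 2) + c div 2 mod 2 * (k div 2 mod 2) + c div 4 mod 2 * (k div 4 mod 2)) mod 2"
definition xr :: "nat \<Rightarrow> nat \<Rightarrow> nat" where
 "xr a b = (a + b) mod 2 + 2 * ((a div 2 + b div 2) mod 2) + 4 * ((a div 4 + b div 4) mod 2)"
lemma ell_tab[simp]:
  "ell 0 0 = 0"
  "ell 0 1 = 0"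
  "ell 0 (Suc 0) = 0"
  "ell 0 2 = 0"
  "ell 0 3 = 0"
  "ell 0 4 = 0"
  "ell 0 5 = 0"
  "ell 0 6 = 0"
  "ell 0 7 = 0"
  "ell 1 0 = 0"
  "ell (Suc 0) 0 = 0"
  "ell 1 1 = 1"
  "ell (Suc 0) (Suc 0) = 1"
  "ell 1 2 = 0"
  "ell (Suc 0) 2 = 0"
  "ell 1 3 = 1"
  "ell (Suc 0) 3 = 1"
  "ell 1 4 = 0"
  "ell (Suc 0) 4 = 0"
  "ell 1 5 = 1"
  "ell (Suc 0) 5 = 1"
  "ell 1 6 = 0"
  "ell (Suc 0) 6 = 0"
  "ell 1 7 = 1"
  "ell (Suc 0) 7 = 1"
  "ell 2 0 = 0"
  "ell 2 1 = 0"
  "ell 2 (Suc 0) = 0"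
  "ell 2 2 = 1"
  "ell 2 3 = 1"
  "ell 2 4 = 0"
  "ell 2 5 = 0"
  "ell 2 6 = 1"
  "ell 2 7 = 1"
  "ell 3 0 = 0"
  "ell 3 1 = 1"
  "ell 3 (Suc 0) = 1"
  "ell 3 2 = 1"
  "ell 3 3 = 0"
  "ell 3 4 = 0"
  "ell 3 5 = 1"
  "ell 3 6 = 1"
  "ell 3 7 = 0"
  "ell 4 0 = 0"
  "ell 4 1 = 0"
  "ell 4 (Suc 0) = 0"
  "ell 4 2 = 0"
  "ell 4 3 = 0"
  "ell 4 4 = 1"
  "ell 4 5 = 1"
  "ell 4 6 = 1"
  "ell 4 7 = 1"
  "ell 5 0 = 0"
  "ell 5 1 = 1"
  "ell 5 (Suc 0) = 1"
  "ell 5 2 = 0"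
  "ell 5 3 = 1"
  "ell 5 4 = 1"
  "ell 5 5 = 0"
  "ell 5 6 = 1"
  "ell 5 7 = 0"
  "ell 6 0 = 0"
  "ell 6 1 = 0"
  "ell 6 (Suc 0) = 0"
  "ell 6 2 = 1"
  "ell 6 3 = 1"
  "ell 6 4 = 1"
  "ell 6 5 = 1"
  "ell 6 6 = 0"
  "ell 6 7 = 0"
  "ell 7 0 = 0"
  "ell 7 1 = 1"
  "ell 7 (Suc 0) = 1"
  "ell 7 2 = 1"
  "ell 7 3 = 0"
  "ell 7 4 = 1"
  "ell 7 5 = 0"
  "ell 7 6 = 0"
  "ell 7 7 = 1"
  by (simp_all add: ell_def)
lemma xr_tab[simp]:
  "xr 0 0 = 0"
  "xr 0 1 = 1"
  "xr 0 (Suc 0) = 1"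
  "xr 0 2 = 2"
  "xr 0 3 = 3"
  "xr 0 4 = 4"
  "xr 0 5 = 5"
  "xr 0 6 = 6"
  "xr 0 7 = 7"
  "xr 1 0 = 1"
  "xr (Suc 0) 0 = 1"
  "xr 1 1 = 0"
  "xr (Suc 0) (Suc 0) = 0"
  "xr 1 2 = 3"
  "xr (Suc 0) 2 = 3"
  "xr 1 3 = 2"
  "xr (Suc 0) 3 = 2"
  "xr 1 4 = 5"
  "xr (Suc 0) 4 = 5"
  "xr 1 5 = 4"
  "xr (Suc 0) 5 = 4"
  "xr 1 6 = 7"
  "xr (Suc 0) 6 = 7"
  "xr 1 7 = 6"
  "xr (Suc 0) 7 = 6"
  "xr 2 0 = 2"
  "xr 2 1 = 3"
  "xr 2 (Suc 0) = 3"
  "xr 2 2 = 0"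
  "xr 2 3 = 1"
  "xr 2 4 = 6"
  "xr 2 5 = 7"
  "xr 2 6 = 4"
  "xr 2 7 = 5"
  "xr 3 0 = 3"
  "xr 3 1 = 2"
  "xr 3 (Suc 0) = 2"
  "xr 3 2 = 1"
  "xr 3 3 = 0"
  "xr 3 4 = 7"
  "xr 3 5 = 6"
  "xr 3 6 = 5"
  "xr 3 7 = 4"
  "xr 4 0 = 4"
  "xr 4 1 = 5"
  "xr 4 (Suc 0) = 5"
  "xr 4 2 = 6"
  "xr 4 3 = 7"
  "xr 4 4 = 0"
  "xr 4 5 = 1"
  "xr 4 6 = 2"
  "xr 4 7 = 3"
  "xr 5 0 = 5"
  "xr 5 1 = 4"
  "xr 5 (Suc 0) = 4"
  "xr 5 2 = 7"
  "xr 5 3 = 6"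
  "xr 5 4 = 1"
  "xr 5 5 = 0"
  "xr 5 6 = 3"
  "xr 5 7 = 2"
  "xr 6 0 = 6"
  "xr 6 1 = 7"
  "xr 6 (Suc 0) = 7"
  "xr 6 2 = 4"
  "xr 6 3 = 5"
  "xr 6 4 = 2"
  "xr 6 5 = 3"
  "xr 6 6 = 0"
  "xr 6 7 = 1"
  "xr 7 0 = 7"
  "xr 7 1 = 6"
  "xr 7 (Suc 0) = 6"
  "xr 7 2 = 5"
  "xr 7 3 = 4"
  "xr 7 4 = 3"
  "xr 7 5 = 2"
  "xr 7 6 = 1"
  "xr 7 7 = 0"
  by (simp_all add: xr_def)
lemma set7: "{1..7::nat} = {1,2,3,4,5,6,7}" by auto
lemma set8: "{..<8::nat} = {0,1,2,3,4,5,6,7}" by auto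

lemma brute_surj0:
  "\<forall>a\<in>{1..7}. \<forall>b\<in>{1..7}. \<forall>c\<in>{1..7}. a \<noteq> b \<longrightarrow> a \<noteq> c \<longrightarrow> b \<noteq> c \<longrightarrow> c \<noteq> xr a b \<longrightarrow>
    (\<forall>x\<in>{0,1}. \<forall>y\<in>{0,1}. \<forall>z\<in>{0,1}. \<exists>k\<in>{..<8}. ell a k = x \<and> ell b k = y \<and> ell c k = z)"
  unfolding set7 set8 by simp
lemma brute_inj0:
  "\<forall>a\<in>{1..7}. \<forall>b\<in>{1..7}. \<forall>c\<in>{1..7}. a \<noteq> b \<longrightarrow> a \<noteq> c \<longrightarrow> b \<noteq> c \<longrightarrow> c \<noteq> xr a b \<longrightarrow>
    (\<forall>k\<in>{..<8}. \<forall>k'\<in>{..<8}. ell a k = ell a k' \<longrightarrow> ell b k = ell b k' \<longrightarrow> ell c k = ell c k' \<longrightarrow> k = k')"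
  unfolding set7 set8 by simp
lemma xr_inv0: "\<forall>a\<in>{..<8}. \<forall>b\<in>{..<8}. \<forall>c\<in>{..<8}. (c = xr a b) = (a = xr c b)"
  unfolding set8 by simp
lemma xr_comm: "xr a b = xr b a" by (simp add: xr_def add.commute)
lemma xr_lt: "xr a b < 8" by (simp add: xr_def)
lemma ell_lt: "ell a b < 2" by (simp add: ell_def)

lemma xr_inv: "a < 8 \<Longrightarrow> b < 8 \<Longrightarrow> c < 8 \<Longrightarrow> (c = xr a b) = (a = xr c b)"
  using xr_inv0 by auto

definition goodT :: "(nat \<Rightarrow> nat) \<Rightarrow> nat set \<Rightarrow> bool" where
 "goodT col T \<longleftrightarrow> (\<forall>f. (\<forall>i\<in>T. f i < 2) \<longrightarrow> (\<exists>k<8. \<forall>i\<in>T. ell (col i) k = f i)) \<and>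
    (\<forall>k<8. \<forall>k'<8. (\<forall>i\<in>T. ell (col i) k = ell (col i) k') \<longrightarrow> k = k')"

definition indepT :: "(nat \<Rightarrow> nat) \<Rightarrow> nat set \<Rightarrow> bool" where
 "indepT col T \<longleftrightarrow> (\<forall>y\<in>T. col y \<in> {1..7}) \<and> (\<forall>y\<in>T. \<forall>z\<in>T. y \<noteq> z \<longrightarrow> col y \<noteq> col z) \<and>
    (\<forall>y\<in>T. \<forall>z\<in>T. \<forall>u\<in>T. y \<noteq> z \<longrightarrow> u \<noteq> y \<longrightarrow> u \<noteq> z \<longrightarrow> col u \<noteq> xr (col y) (col z))"

lemma indep_good:
  assumes "card T = 3" "indepT col T"
  shows "goodT col T"
proof -
  obtain a b c where T: "T = {a,b,c}" "a \<noteq> b" "b \<noteq> c" "a \<noteq> c"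
    using assms(1) card_3_iff by metis
  have ca: "col a \<in> {1..7}" "col b \<in> {1..7}" "col c \<in> {1..7}"
    using assms(2) T unfolding indepT_def by auto
  have d: "col a \<noteq> col b" "col a \<noteq> col c" "col b \<noteq> col c" "col c \<noteq> xr (col a) (col b)"
    using assms(2) T unfolding indepT_def by auto
  show ?thesis unfolding goodT_def
  proof (intro conjI allI impI)
    fix f :: "nat \<Rightarrow> nat" assume f: "\<forall>i\<in>T. f i < 2"
    have fs: "f a \<in> {0,1}" "f b \<in> {0,1}" "f c \<in> {0,1}" using f T by auto
    obtain k where "k \<in> {..<8}" "ell (col a) k = f a" "ell (col b) k = f b" "ell (col c) k = f c"
      using brute_surj0[rule_format, OF ca d fs] by blast
    then show "\<exists>k<8. \<forall>i\<in>T. ell (col i) k = f i" using T by auto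
  next
    fix k k' :: nat assume "k < 8" "k' < 8" "\<forall>i\<in>T. ell (col i) k = ell (col i) k'"
    then show "k = k'" using brute_inj0[rule_format, OF ca d, of k k'] T by auto
  qed
qed

lemma two_elems:
  assumes "card S = 2" "y \<in> S" "z \<in> S" "y \<noteq> z"
  shows "(y = Min S \<and> z = Max S) \<or> (y = Max S \<and> z = Min S)"
proof -
  obtain p q where S: "S = {p,q}" "p \<noteq> q" using assms(1) card_2_iff by metis
  show ?thesis using assms(2-4) S by (cases "p < q") (auto simp: max_def min_def)
qed

lemma greedy:
  fixes E :: "nat set set"
  assumes E3: "\<And>T. T \<in> E \<Longrightarrow> card T = 3" and deg: "\<And>x. card {T\<in>E. x \<in> T} \<le> 2"
    and Efin: "finite E"
  shows "finite V \<Longrightarrow> \<exists>col. (\<forall>y. col y \<in> {1..7}) \<and>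
     (\<forall>T\<in>E. \<forall>y\<in>T\<inter>V. \<forall>z\<in>T\<inter>V. y \<noteq> z \<longrightarrow> col y \<noteq> col z) \<and>
     (\<forall>T\<in>E. \<forall>y\<in>T\<inter>V. \<forall>z\<in>T\<inter>V. \<forall>u\<in>T\<inter>V. y \<noteq> z \<longrightarrow> u \<noteq> y \<longrightarrow> u \<noteq> z \<longrightarrow> col u \<noteq> xr (col y) (col z))"
proof (induction V rule: finite_induct)
  case empty
  show ?case by (rule exI[of _ "\<lambda>_. 1"]) auto
next
  case (insert x V)
  then obtain col where c1: "\<forall>y. col y \<in> {1..7}"
    and c2: "\<forall>T\<in>E. \<forall>y\<in>T\<inter>V. \<forall>z\<in>T\<inter>V. y \<noteq> z \<longrightarrow> col y \<noteq> col z"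
    and c3: "\<forall>T\<in>E. \<forall>y\<in>T\<inter>V. \<forall>z\<in>T\<inter>V. \<forall>u\<in>T\<inter>V. y \<noteq> z \<longrightarrow> u \<noteq> y \<longrightarrow> u \<noteq> z \<longrightarrow> col u \<noteq> xr (col y) (col z)"
    by blast
  define Ex where "Ex = {T\<in>E. x \<in> T}"
  have Exfin: "finite Ex" using Efin Ex_def by simp
  have Excard: "card Ex \<le> 2" using deg Ex_def by simp
  have T2: "card (T - {x}) = 2" if "T \<in> Ex" for T
    using that E3[of T] unfolding Ex_def by (auto simp: card_Diff_singleton_if)
  define Fb where "Fb = col ` (\<Union>T\<in>Ex. T - {x}) \<union> (\<lambda>T. xr (col (Min (T - {x}))) (col (Max (T - {x})))) ` Ex"
  have "card (\<Union>T\<in>Ex. T - {x}) \<le> (\<Sum>T\<in>Ex. card (T - {x}))" by (rule card_UN_le[OF Exfin])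
  also have "\<dots> = (\<Sum>T\<in>Ex. 2)" using T2 by simp
  also have "\<dots> \<le> 4" using Excard by simp
  finally have u4: "card (\<Union>T\<in>Ex. T - {x}) \<le> 4" .
  have ufin: "finite (\<Union>T\<in>Ex. T - {x})" using Exfin T2
    by (metis (no_types, lifting) card.infinite finite_UN_I zero_neq_numeral)
  have "card Fb \<le> card (col ` (\<Union>T\<in>Ex. T - {x})) + card ((\<lambda>T. xr (col (Min (T - {x}))) (col (Max (T - {x})))) ` Ex)"
    unfolding Fb_def by (rule card_Un_le)
  also have "\<dots> \<le> 4 + 2"
    using card_image_le[OF ufin, of col] card_image_le[OF Exfin] u4 Excard
    by (meson add_le_mono le_trans)
  finally have Fb6: "card Fb \<le> 6" by simp
  have Fbfin: "finite Fb" unfolding Fb_def using ufin Exfin by simp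
  have "\<not> {1..7::nat} \<subseteq> Fb"
  proof
    assume "{1..7::nat} \<subseteq> Fb"
    then have "card {1..7::nat} \<le> card Fb" using Fbfin by (rule card_mono[rotated])
    then show False using Fb6 by simp
  qed
  then obtain a where a: "a \<in> {1..7}" "a \<notin> Fb" by blast
  have aneq: "a \<noteq> col z" if "T \<in> E" "x \<in> T" "z \<in> T" "z \<noteq> x" for T z
    using a that unfolding Fb_def Ex_def by blast
  have axr: "a \<noteq> xr (col p) (col q)" if "T \<in> E" "x \<in> T" "p \<in> T" "q \<in> T" "p \<noteq> x" "q \<noteq> x" "p \<noteq> q" for T p q
  proof -
    have TE: "T \<in> Ex" using that Ex_def by simp
    have "(p = Min (T - {x}) \<and> q = Max (T - {x})) \<or> (p = Max (T - {x}) \<and> q = Min (T - {x}))"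
      using two_elems[OF T2[OF TE], of p q] that by simp
    then have "xr (col p) (col q) = xr (col (Min (T - {x}))) (col (Max (T - {x})))"
      using xr_comm by metis
    then show ?thesis using a TE unfolding Fb_def by auto
  qed
  define col' where "col' = col(x := a)"
  show ?case
  proof (rule exI[of _ col'], intro conjI ballI impI)
    show "\<forall>y. col' y \<in> {1..7}" using c1 a unfolding col'_def by simp
  next
    fix T y z assume T: "T \<in> E" and y: "y \<in> T \<inter> insert x V" and z: "z \<in> T \<inter> insert x V" and yz: "y \<noteq> z"
    show "col' y \<noteq> col' z"
    proof (cases "y = x \<or> z = x")
      case True
      then show ?thesis using aneq[OF T] y z yz unfolding col'_def
        by (metis IntD1 fun_upd_apply)
    next
      case False
      then show ?thesis using c2 T y z yz unfolding col'_def by auto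
    qed
  next
    fix T y z u assume T: "T \<in> E" and y: "y \<in> T \<inter> insert x V" and z: "z \<in> T \<inter> insert x V"
      and u: "u \<in> T \<inter> insert x V" and d: "y \<noteq> z" "u \<noteq> y" "u \<noteq> z"
    have lt: "col v < 8" for v using c1[rule_format, of v] by auto
    have a8: "a < 8" using a by auto
    show "col' u \<noteq> xr (col' y) (col' z)"
    proof (cases "u = x")
      case True
      have xT: "x \<in> T" using u True by auto
      show ?thesis using axr[OF T xT, of y z] y z d True unfolding col'_def by auto
    next
      case ux: False
      show ?thesis
      proof (cases "y = x")
        case True
        have "col u \<noteq> xr a (col z)"
        proof
          assume "col u = xr a (col z)"
          then have "a = xr (col u) (col z)" using xr_inv[OF a8 lt lt] by simp
          then show False using axr[OF T _, of u z] True y u z d by auto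
        qed
        then show ?thesis using True ux d unfolding col'_def by auto
      next
        case yx: False
        show ?thesis
        proof (cases "z = x")
          case True
          have "col u \<noteq> xr a (col y)"
          proof
            assume "col u = xr a (col y)"
            then have "a = xr (col u) (col y)" using xr_inv[OF a8 lt lt] by simp
            then show False using axr[OF T _, of u y] True z u y d by auto
          qed
          then show ?thesis using True ux yx d xr_comm unfolding col'_def by auto
        next
          case False
          then show ?thesis using c3 T y z u d ux yx unfolding col'_def by auto
        qed
      qed
    qed
  qed
qed


definition wd :: "nat set \<Rightarrow> (nat \<Rightarrow> nat) \<Rightarrow> nat \<Rightarrow> nat" where
  "wd T f = (\<lambda>i. if i \<in> T then f i else 0)"

lemma Hq_supp:
  assumes "w \<in> Hq 3 N 3"
  shows "supp w \<in> triples {..<N}" "\<And>i. i \<in> supp w \<Longrightarrow> w i = 1 \<or> w i = 2"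
    "\<And>i. i \<notin> supp w \<Longrightarrow> w i = 0" "card (supp w) = 3" "finite (supp w)"
proof -
  have w: "\<forall>i<N. w i < 3" "\<forall>i\<ge>N. w i = 0" "card (supp w) = 3"
    using assms unfolding Hq_def words_def by auto
  have "supp w \<subseteq> {..<N}"
  proof
    fix x assume x: "x \<in> supp w"
    show "x \<in> {..<N}"
    proof (rule ccontr)
      assume "x \<notin> {..<N}"
      then have "w x = 0" using w(2) by auto
      then show False using x unfolding supp_def by simp
    qed
  qed
  then show "supp w \<in> triples {..<N}" using w unfolding triples_def by auto
  show "\<And>i. i \<in> supp w \<Longrightarrow> w i = 1 \<or> w i = 2"
  proof -
    fix i assume i: "i \<in> supp w"
    then have "i < N" using \<open>supp w \<subseteq> {..<N}\<close> by auto
    then have "w i < 3" using w(1) by auto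
    moreover have "w i \<noteq> 0" using i unfolding supp_def by simp
    ultimately show "w i = 1 \<or> w i = 2" by linarith
  qed
  show "\<And>i. i \<notin> supp w \<Longrightarrow> w i = 0" unfolding supp_def by simp
  show "card (supp w) = 3" by (rule w(3))
  then show "finite (supp w)" by (metis card.infinite zero_neq_numeral)
qed

lemma wd_Hq:
  assumes "T \<in> triples {..<N}" "\<And>i. i \<in> T \<Longrightarrow> f i = 1 \<or> f i = 2"
  shows "wd T f \<in> Hq 3 N 3" "supp (wd T f) = T"
proof -
  show s: "supp (wd T f) = T" unfolding supp_def wd_def using assms(2) by force
  have T: "T \<subseteq> {..<N}" "card T = 3" using assms(1) unfolding triples_def by auto
  have "\<forall>i<N. wd T f i < 3"
  proof (intro allI impI)
    fix i assume "i < N"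
    show "wd T f i < 3" using assms(2)[of i] unfolding wd_def by (cases "i \<in> T") auto
  qed
  moreover have "\<forall>i\<ge>N. wd T f i = 0" using T(1) unfolding wd_def by auto
  ultimately show "wd T f \<in> Hq 3 N 3" unfolding Hq_def words_def using s T(2) by simp
qed

lemma Hq_wd: "w \<in> Hq 3 N 3 \<Longrightarrow> w = wd (supp w) w"
  unfolding wd_def supp_def by auto

lemma code_same:
  assumes C: "is_code 3 N 5 3 C" and w: "w1 \<in> C" "w2 \<in> C" and i: "w1 i \<noteq> 0" "w1 i = w2 i"
  shows "w1 = w2"
proof (rule ccontr)
  assume ne: "w1 \<noteq> w2"
  have H: "w1 \<in> Hq 3 N 3" "w2 \<in> Hq 3 N 3" using C w unfolding is_code_def by auto
  define S1 where "S1 = supp w1"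
  define S2 where "S2 = supp w2"
  have f: "finite S1" "finite S2" "card S1 = 3" "card S2 = 3"
    using Hq_supp[OF H(1)] Hq_supp[OF H(2)] S1_def S2_def by auto
  have iS: "i \<in> S1 \<inter> S2" using i unfolding S1_def S2_def supp_def by auto
  have "card (S1 \<union> S2) + card (S1 \<inter> S2) = 6" using card_Un_Int[OF f(1,2)] f by simp
  moreover have "card (S1 \<inter> S2) \<ge> 1" using iS f
    by (metis One_nat_def card_0_eq empty_iff finite_Int not_less_eq_eq le_zero_eq)
  ultimately have "card (S1 \<union> S2) \<le> 5" by simp
  then have c4: "card ((S1 \<union> S2) - {i}) \<le> 4" using iS f by (simp add: card_Diff_singleton_if)
  have "{j. j < N \<and> w1 j \<noteq> w2 j} \<subseteq> (S1 \<union> S2) - {i}"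
    using i unfolding S1_def S2_def supp_def by auto
  then have "card {j. j < N \<and> w1 j \<noteq> w2 j} \<le> 4"
    using c4 f by (meson card_mono finite_Diff finite_UnI le_trans)
  moreover have "5 \<le> hdist N w1 w2" using C w ne unfolding is_code_def by auto
  ultimately show False unfolding hdist_def by simp
qed

lemma subsing_fin: "(\<And>a b. a \<in> S \<Longrightarrow> b \<in> S \<Longrightarrow> a = b) \<Longrightarrow> finite S"
  by (metis finite.simps subsetI singletonI subset_singletonD finite_insert)

lemma code_bound:
  assumes C: "is_code 3 N 5 3 C"
  shows "finite C" "card C \<le> 2 * N div 3"
proof -
  have H: "\<And>w. w \<in> C \<Longrightarrow> w \<in> Hq 3 N 3" using C unfolding is_code_def by auto
  define A where "A = (\<lambda>i v. {w\<in>C. w i = v})"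
  have Asub: "\<And>i v. v \<noteq> 0 \<Longrightarrow> (\<And>a b. a \<in> A i v \<Longrightarrow> b \<in> A i v \<Longrightarrow> a = b)"
    unfolding A_def using code_same[OF C] by auto
  have Afin: "\<And>i v. v \<noteq> 0 \<Longrightarrow> finite (A i v)" using Asub subsing_fin by metis
  have "C \<subseteq> (\<Union>i<N. A i 1 \<union> A i 2)"
  proof
    fix w assume w: "w \<in> C"
    have "card (supp w) = 3" using Hq_supp(4)[OF H[OF w]] .
    then obtain i where i: "i \<in> supp w" by fastforce
    then have "i < N" using Hq_supp(1)[OF H[OF w]] unfolding triples_def by auto
    then show "w \<in> (\<Union>i<N. A i 1 \<union> A i 2)" using Hq_supp(2)[OF H[OF w] i] w unfolding A_def by auto
  qed
  moreover have "finite (\<Union>i<N. A i 1 \<union> A i 2)" using Afin by simp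
  ultimately show fC: "finite C" by (rule finite_subset)
  have le1: "card (A i v) \<le> 1" if "v \<noteq> 0" for i v
    using card_le_Suc0_iff_eq[OF Afin[OF that, of i]] Asub[OF that] by auto
  have le2: "card {w\<in>C. w i \<noteq> 0} \<le> 2" for i
  proof -
    have "{w\<in>C. w i \<noteq> 0} \<subseteq> A i 1 \<union> A i 2" 
    proof
      fix w assume w: "w \<in> {w\<in>C. w i \<noteq> 0}"
      then have "i \<in> supp w" unfolding supp_def by simp
      then have "w i = 1 \<or> w i = 2" using Hq_supp(2)[OF H] w by blast
      then show "w \<in> A i 1 \<union> A i 2" using w unfolding A_def by auto
    qed
    then have "card {w\<in>C. w i \<noteq> 0} \<le> card (A i 1 \<union> A i 2)"
      using Afin by (intro card_mono) auto
    also have "\<dots> \<le> card (A i 1) + card (A i 2)" by (rule card_Un_le)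
    also have "\<dots> \<le> 2" using le1[of 1 i] le1[of 2 i] by simp
    finally show ?thesis .
  qed
  have "(\<Sum>w\<in>C. card (supp w)) = (\<Sum>w\<in>C. 3)" using Hq_supp(4) H by (intro sum.cong) auto
  then have "3 * card C = (\<Sum>w\<in>C. card (supp w))" by simp
  also have "\<dots> = (\<Sum>w\<in>C. \<Sum>i<N. (if w i \<noteq> 0 then 1 else 0))"
  proof (rule sum.cong[OF refl])
    fix w assume w: "w \<in> C"
    have "supp w = {i\<in>{..<N}. w i \<noteq> 0}"
      using Hq_supp(1)[OF H[OF w]] unfolding triples_def supp_def by auto
    then show "card (supp w) = (\<Sum>i<N. (if w i \<noteq> 0 then 1 else 0))"
      by (simp add: sum.If_cases Int_def conj_commute)
  qed
  also have "\<dots> = (\<Sum>i<N. \<Sum>w\<in>C. (if w i \<noteq> 0 then 1 else 0))" by (rule sum.swap)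
  also have "\<dots> = (\<Sum>i<N. card {w\<in>C. w i \<noteq> 0})"
    using fC by (simp add: sum.If_cases Int_def)
  also have "\<dots> \<le> (\<Sum>i<N. 2)" by (rule sum_mono) (rule le2)
  finally have "3 * card C \<le> 2 * N" by simp
  then show "card C \<le> 2 * N div 3" by linarith
qed

lemma Aq_eq:
  assumes "is_code 3 N 5 3 F" "m \<le> card F" "2 * N div 3 \<le> m"
  shows "card F = Aq 3 N 5 3"
proof -
  define S where "S = {card C | C. is_code 3 N 5 3 C}"
  have Sb: "S \<subseteq> {..2 * N div 3}" unfolding S_def using code_bound(2) by auto
  have Sfin: "finite S" using Sb finite_subset by blast
  have FS: "card F \<in> S" unfolding S_def using assms(1) by blast
  have "card F \<le> Max S" using Sfin FS by simp
  moreover have "Max S \<le> 2 * N div 3" using Sb Sfin FS by (subst Max_le_iff) auto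
  ultimately have "card F = Max S" using assms by linarith
  then show ?thesis unfolding Aq_def S_def by simp
qed


lemma core:
  fixes G :: "nat set \<Rightarrow> 'g" and s :: "nat set \<Rightarrow> bool" and col :: "'g \<Rightarrow> nat \<Rightarrow> nat"
  assumes A1: "\<And>T1 T2. T1 \<in> triples {..<N} \<Longrightarrow> T2 \<in> triples {..<N} \<Longrightarrow> T1 \<noteq> T2 \<Longrightarrow> G T1 = G T2 \<Longrightarrow> card (T1 \<inter> T2) \<le> 1"
    and A2: "\<And>T1 T2. T1 \<in> triples {..<N} \<Longrightarrow> T2 \<in> triples {..<N} \<Longrightarrow> T1 \<noteq> T2 \<Longrightarrow> G T1 = G T2 \<Longrightarrow> s T1 = s T2 \<Longrightarrow> T1 \<inter> T2 = {}"
    and B: "\<And>T. T \<in> triples {..<N} \<Longrightarrow> goodT (col (G T)) T"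
    and C: "\<And>T. T \<in> triples {..<N} \<Longrightarrow> m \<le> card {T'\<in>triples {..<N}. G T' = G T}"
    and D: "2 * N div 3 \<le> m"
  shows "\<exists>P. is_TOC 3 N 5 3 P"
proof -
  define tr where "tr = triples {..<N}"
  define H where "H = Hq 3 N 3"
  define lab where "lab = (\<lambda>T k i. if s T then 1 + ell (col (G T) i) k else 2 - ell (col (G T) i) k)"
  have lab12: "lab T k i = 1 \<or> lab T k i = 2" for T k i
    using ell_lt[of "col (G T) i" k] unfolding lab_def by auto
  have labinj: "ell (col (G T) i) k = ell (col (G T) i) k'" if "lab T k i = lab T k' i" for T k k' i
    using that ell_lt[of "col (G T) i" k] ell_lt[of "col (G T) i" k'] unfolding lab_def
    by (auto split: if_splits)
  define Pk where "Pk = (\<lambda>w k. k < 8 \<and> (\<forall>i\<in>supp w. w i = lab (supp w) k i))"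
  have ex1: "\<exists>!k. Pk w k" if w: "w \<in> H" for w
  proof -
    let ?T = "supp w"
    have T: "?T \<in> tr" using Hq_supp(1) w unfolding H_def tr_def by blast
    have w12: "\<And>i. i \<in> ?T \<Longrightarrow> w i = 1 \<or> w i = 2" using Hq_supp(2) w unfolding H_def by blast
    define f where "f = (\<lambda>i. if s ?T then w i - 1 else 2 - w i)"
    have "\<forall>i\<in>?T. f i < 2" using w12 unfolding f_def by fastforce
    then obtain k where k: "k < 8" "\<forall>i\<in>?T. ell (col (G ?T) i) k = f i"
      using B[OF T[unfolded tr_def]] unfolding goodT_def by blast
    have "Pk w k" unfolding Pk_def
    proof (intro conjI ballI)
      show "k < 8" by fact
      fix i assume i: "i \<in> ?T"
      show "w i = lab ?T k i" using k(2) i w12[OF i] unfolding lab_def f_def by auto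
    qed
    moreover have "k' = k" if "Pk w k'" for k'
    proof -
      have "\<forall>i\<in>?T. ell (col (G ?T) i) k' = ell (col (G ?T) i) k"
        using that \<open>Pk w k\<close> labinj unfolding Pk_def by metis
      then show ?thesis using B[OF T[unfolded tr_def]] that k(1) unfolding goodT_def Pk_def by blast
    qed
    ultimately show ?thesis by blast
  qed
  define kk where "kk = (\<lambda>w. THE k. Pk w k)"
  have kk: "Pk w (kk w)" if "w \<in> H" for w using theI'[OF ex1[OF that]] unfolding kk_def .
  have kk_eq: "kk w = k" if "w \<in> H" "Pk w k" for w k
    unfolding kk_def using ex1[OF that(1)] that(2) by (rule the1_equality)
  define idx where "idx = (\<lambda>w. (G (supp w), kk w))"
  define fib where "fib = (\<lambda>a. {w\<in>H. idx w = a})"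
  define P where "P = fib ` (idx ` H)"
  have wform: "w = wd (supp w) (lab (supp w) k)" if "w \<in> H" "kk w = k" for w k
  proof -
    have "Pk w k" using kk[OF that(1)] that(2) by simp
    then show ?thesis unfolding Pk_def wd_def supp_def by auto
  qed
  have fib_ok: "optimal_code 3 N 5 3 (fib a)" if a: "a \<in> idx ` H" for a
  proof -
    obtain w0 where w0: "w0 \<in> H" "a = idx w0" using a by blast
    define g where "g = G (supp w0)"
    define k where "k = kk w0"
    have a': "a = (g, k)" unfolding g_def k_def w0 idx_def by simp
    have mem: "G (supp w) = g \<and> kk w = k" if "w \<in> fib a" for w
      using that unfolding fib_def a' idx_def by auto
    have fH: "fib a \<subseteq> H" unfolding fib_def by auto
    have code: "is_code 3 N 5 3 (fib a)"
      unfolding is_code_def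
    proof (intro conjI ballI impI)
      show "fib a \<noteq> {}" using w0 unfolding fib_def by auto
      show "fib a \<subseteq> Hq 3 N 3" using fH H_def by simp
      fix w1 w2 assume w1: "w1 \<in> fib a" and w2: "w2 \<in> fib a" and ne: "w1 \<noteq> w2"
      define T1 where "T1 = supp w1"
      define T2 where "T2 = supp w2"
      have H1: "w1 \<in> H" and H2: "w2 \<in> H" using w1 w2 fH by auto
      have e1: "w1 = wd T1 (lab T1 k)" using wform[OF H1] mem[OF w1] T1_def by simp
      have e2: "w2 = wd T2 (lab T2 k)" using wform[OF H2] mem[OF w2] T2_def by simp
      have Gs: "G T1 = G T2" using mem[OF w1] mem[OF w2] T1_def T2_def by simp
      have tr1: "T1 \<in> triples {..<N}" and tr2: "T2 \<in> triples {..<N}"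
        using Hq_supp(1) H1 H2 T1_def T2_def H_def by auto
      have c3: "card T1 = 3" "card T2 = 3" "finite T1" "finite T2"
        using Hq_supp(4,5) H1 H2 T1_def T2_def H_def by auto
      have neT: "T1 \<noteq> T2" using ne e1 e2 by auto
      have int1: "card (T1 \<inter> T2) \<le> 1" using A1[OF tr1 tr2 neT Gs] .
      have sub: "T1 \<union> T2 \<subseteq> {i. i < N \<and> w1 i \<noteq> w2 i}"
      proof
        fix i assume i: "i \<in> T1 \<union> T2"
        have iN: "i < N" using i tr1 tr2 unfolding triples_def by auto
        have "w1 i \<noteq> w2 i"
        proof (cases "i \<in> T1 \<and> i \<in> T2")
          case True
          then have "T1 \<inter> T2 \<noteq> {}" by auto
          then have "s T1 \<noteq> s T2" using A2[OF tr1 tr2 neT Gs] by blast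
          then show ?thesis using True e1 e2 Gs ell_lt[of "col (G T2) i" k]
            unfolding wd_def lab_def by (auto; arith)
        next
          case False
          then show ?thesis using i e1 e2 lab12 unfolding wd_def
            by (metis Un_iff zero_neq_numeral zero_neq_one)
        qed
        then show "i \<in> {i. i < N \<and> w1 i \<noteq> w2 i}" using iN by simp
      qed
      have "card (T1 \<union> T2) + card (T1 \<inter> T2) = 6" using card_Un_Int[OF c3(3,4)] c3 by simp
      then have "5 \<le> card (T1 \<union> T2)" using int1 by simp
      also have "\<dots> \<le> card {i. i < N \<and> w1 i \<noteq> w2 i}" using sub by (intro card_mono) auto
      finally show "5 \<le> hdist N w1 w2" unfolding hdist_def .
    qed
    have T0: "supp w0 \<in> triples {..<N}" using Hq_supp(1) w0 H_def by auto
    define W where "W = (\<lambda>T. wd T (lab T k))"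
    have Wfib: "W T \<in> fib a" if T: "T \<in> {T'\<in>triples {..<N}. G T' = g}" for T
    proof -
      have T': "T \<in> triples {..<N}" "G T = g" using T by auto
      have WH: "W T \<in> H" and sW: "supp (W T) = T"
        using wd_Hq[OF T'(1), of "lab T k"] lab12 unfolding W_def H_def by auto
      have k8: "k < 8" using kk[OF w0(1)] unfolding k_def Pk_def by simp
      have "Pk (W T) k" unfolding Pk_def sW using k8 by (simp add: W_def wd_def)
      then have "kk (W T) = k" using kk_eq[OF WH] by simp
      then show ?thesis unfolding fib_def idx_def a' using WH sW T'(2) by simp
    qed
    have Winj: "inj_on W {T'\<in>triples {..<N}. G T' = g}"
    proof (rule inj_onI)
      fix T1 T2 assume "T1 \<in> {T'\<in>triples {..<N}. G T' = g}" "T2 \<in> {T'\<in>triples {..<N}. G T' = g}" "W T1 = W T2"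
      then show "T1 = T2" using wd_Hq(2)[of _ N "lab _ k"] lab12 unfolding W_def by (metis (lifting) mem_Collect_eq)
    qed
    have "m \<le> card {T'\<in>triples {..<N}. G T' = g}" using C[OF T0] unfolding g_def .
    also have "\<dots> = card (W ` {T'\<in>triples {..<N}. G T' = g})" using card_image[OF Winj] by simp
    also have "\<dots> \<le> card (fib a)" using Wfib code_bound(1)[OF code] by (intro card_mono) auto
    finally have "m \<le> card (fib a)" .
    then show ?thesis unfolding optimal_code_def using code Aq_eq[OF code _ D] by simp
  qed
  have "is_TOC 3 N 5 3 P" unfolding is_TOC_def
  proof (intro conjI ballI impI)
    fix C assume "C \<in> P" then show "optimal_code 3 N 5 3 C" using fib_ok unfolding P_def by auto
  next
    show "\<Union>P = Hq 3 N 3" unfolding P_def fib_def H_def by auto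
  next
    fix C D assume "C \<in> P" "D \<in> P" "C \<noteq> D"
    then show "C \<inter> D = {}" unfolding P_def fib_def by auto
  qed
  then show ?thesis by blast
qed


lemma card_one_elem:
  assumes "finite S" "\<And>a b. a \<in> S \<Longrightarrow> b \<in> S \<Longrightarrow> a = b"
  shows "card S \<le> 1"
  using card_le_Suc0_iff_eq[OF assms(1)] assms(2) by auto

lemma kts_struct:
  fixes Y :: "nat set"
  assumes K: "is_KTS Y B" and cY: "card Y = n" and n12: "n mod 12 = 9"
  shows "\<exists>R e col. bij_betw e {..<card R} R \<and> even (card R) \<and> \<Union>R = B \<and>
     (\<forall>P\<in>R. \<forall>Q\<in>R. P \<noteq> Q \<longrightarrow> P \<inter> Q = {}) \<and> (\<forall>P\<in>R. parallel_class Y P \<and> card P = n div 3) \<and>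
     (\<forall>j. 2*j+1 < card R \<longrightarrow> (\<forall>T\<in>e (2*j) \<union> e (2*j+1). goodT (col j) T))"
proof -
  have S: "is_STS Y B" using K unfolding is_KTS_def by blast
  obtain R where R: "\<Union>R = B" "\<forall>P\<in>R. \<forall>Q\<in>R. P \<noteq> Q \<longrightarrow> P \<inter> Q = {}" "\<forall>P\<in>R. parallel_class Y P"
    using K unfolding is_KTS_def by blast
  have fY: "finite Y" and Btr: "B \<subseteq> triples Y"
    and uniq: "\<And>x y. x \<in> Y \<Longrightarrow> y \<in> Y \<Longrightarrow> x \<noteq> y \<Longrightarrow> \<exists>!T. T \<in> B \<and> {x, y} \<subseteq> T"
    using S unfolding is_STS_def by auto
  have T3: "card T = 3" "T \<subseteq> Y" "finite T" if "T \<in> B" for T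
    using that Btr fY unfolding triples_def by (auto intro: finite_subset)
  have fB: "finite B" using Btr fY unfolding triples_def
    by (metis (no_types, lifting) Collect_mono Pow_def finite_Pow_iff finite_subset)
  have fR: "finite R" using R(1) fB by (metis finite_UnionD)
  have PB: "P \<subseteq> B" if "P \<in> R" for P using that R(1) by blast
  have par: "\<Union>P = Y" "\<forall>S\<in>P. \<forall>T\<in>P. S \<noteq> T \<longrightarrow> S \<inter> T = {}" if "P \<in> R" for P
    using R(3) that unfolding parallel_class_def by auto
  have cP: "card P = n div 3" if P: "P \<in> R" for P
  proof -
    have fP: "finite P" using PB[OF P] fB finite_subset by blast
    have "n = card (\<Union>P)" using par(1)[OF P] cY by simp
    also have "\<dots> = sum card P"
      by (rule card_Union_disjoint) (use par(2)[OF P] T3 PB[OF P] in \<open>auto simp: pairwise_def disjnt_def\<close>)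
    also have "\<dots> = sum (\<lambda>_. 3) P" using T3 PB[OF P] by (intro sum.cong) auto
    finally show ?thesis using fP by simp
  qed
  have n9: "n \<ge> 9" using n12 by (metis mod_less_eq_dividend)
  then obtain y where y: "y \<in> Y" using cY by fastforce
  define By where "By = {T\<in>B. y \<in> T}"
  have fBy: "finite By" using fB By_def by simp
  have cBy: "card By * 2 = n - 1"
  proof -
    have "Y - {y} = (\<Union>T\<in>By. T - {y})"
    proof
      show "Y - {y} \<subseteq> (\<Union>T\<in>By. T - {y})"
      proof
        fix z assume z: "z \<in> Y - {y}"
        then obtain T where "T \<in> B" "{y, z} \<subseteq> T" using uniq[OF y, of z] by auto
        then show "z \<in> (\<Union>T\<in>By. T - {y})" using z By_def by auto
      qed
      show "(\<Union>T\<in>By. T - {y}) \<subseteq> Y - {y}" using T3 By_def by auto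
    qed
    then have "card (Y - {y}) = card (\<Union>T\<in>By. T - {y})" by simp
    also have "\<dots> = (\<Sum>T\<in>By. card (T - {y}))"
    proof (rule card_UN_disjoint[OF fBy])
      show "\<forall>T\<in>By. finite (T - {y})" using T3 By_def by auto
      show "\<forall>T1\<in>By. \<forall>T2\<in>By. T1 \<noteq> T2 \<longrightarrow> (T1 - {y}) \<inter> (T2 - {y}) = {}"
      proof (intro ballI impI)
        fix T1 T2 assume T: "T1 \<in> By" "T2 \<in> By" "T1 \<noteq> T2"
        show "(T1 - {y}) \<inter> (T2 - {y}) = {}"
        proof (rule ccontr)
          assume "(T1 - {y}) \<inter> (T2 - {y}) \<noteq> {}"
          then obtain z where z: "z \<in> T1" "z \<in> T2" "z \<noteq> y" by auto
          have "z \<in> Y" using z T T3 By_def by auto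
          then show False using uniq[OF y \<open>z \<in> Y\<close>] z T By_def by (metis (no_types, lifting) empty_subsetI insert_subset mem_Collect_eq)
        qed
      qed
    qed
    also have "\<dots> = (\<Sum>T\<in>By. 2)" using T3 By_def by (intro sum.cong) (auto simp: card_Diff_singleton_if)
    finally show ?thesis using cY y fY by (simp add: card_Diff_singleton_if)
  qed
  define h where "h = (\<lambda>P. THE T. T \<in> P \<and> y \<in> T)"
  have hP: "h P \<in> P \<and> y \<in> h P" if P: "P \<in> R" for P
  proof -
    have ex: "\<exists>T. T \<in> P \<and> y \<in> T" using par(1)[OF P] y by blast
    have "\<exists>!T. T \<in> P \<and> y \<in> T" using ex par(2)[OF P] by blast
    then show ?thesis unfolding h_def by (rule theI')
  qed
  have "bij_betw h R By"
  proof (rule bij_betwI')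
    fix P Q
    assume PQ: "P \<in> R" "Q \<in> R"
    show "(h P = h Q) = (P = Q)"
    proof
      assume eq: "h P = h Q"
      show "P = Q"
      proof (rule ccontr)
        assume "P \<noteq> Q"
        then have "P \<inter> Q = {}" using R(2) PQ by blast
        moreover have "h P \<in> P \<inter> Q" using hP[OF PQ(1)] hP[OF PQ(2)] eq by simp
        ultimately show False by simp
      qed
    qed simp
  next
    fix P assume "P \<in> R" then show "h P \<in> By" using hP PB By_def by auto
  next
    fix T assume T: "T \<in> By"
    then obtain P where P: "P \<in> R" "T \<in> P" using R(1) By_def by auto
    have "h P = T"
    proof (rule ccontr)
      assume "h P \<noteq> T"
      then have "h P \<inter> T = {}" using par(2)[OF P(1)] hP[OF P(1)] P(2) by blast
      moreover have "y \<in> h P \<inter> T" using hP[OF P(1)] T By_def by simp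
      ultimately show False by simp
    qed
    then show "\<exists>P\<in>R. T = h P" using P by auto
  qed
  then have cR: "card R = card By" by (rule bij_betw_same_card)
  have evR: "even (card R)" using cR cBy n12 by presburger
  obtain e where e: "bij_betw e {..<card R} R" using ex_bij_betw_nat_finite[OF fR] lessThan_atLeast0 by metis
  have ecol: "\<exists>col. \<forall>T\<in>e (2*j) \<union> e (2*j+1). goodT col T" if j: "2*j+1 < card R" for j
  proof -
    define P where "P = e (2*j)"
    define Q where "Q = e (2*j+1)"
    have PR: "P \<in> R" "Q \<in> R" using e j unfolding P_def Q_def bij_betw_def by auto
    define E where "E = P \<union> Q"
    have EB: "E \<subseteq> B" using PR PB E_def by auto
    have E3: "\<And>T. T \<in> E \<Longrightarrow> card T = 3" using EB T3 by auto
    have fE: "finite E" using EB fB finite_subset by blast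
    have deg: "card {T\<in>E. x \<in> T} \<le> 2" for x
    proof -
      have "{T\<in>E. x \<in> T} = {T\<in>P. x \<in> T} \<union> {T\<in>Q. x \<in> T}" unfolding E_def by auto
      then have "card {T\<in>E. x \<in> T} \<le> card {T\<in>P. x \<in> T} + card {T\<in>Q. x \<in> T}"
        by (simp add: card_Un_le)
      moreover have "card {T\<in>P. x \<in> T} \<le> 1" "card {T\<in>Q. x \<in> T} \<le> 1"
      proof -
        have fP: "finite P" "finite Q" using fE unfolding E_def by auto
        show "card {T\<in>P. x \<in> T} \<le> 1"
        proof (rule card_one_elem)
          show "finite {T\<in>P. x \<in> T}" using fP by simp
          fix a b assume "a \<in> {T\<in>P. x \<in> T}" "b \<in> {T\<in>P. x \<in> T}"
          then show "a = b" using par(2)[OF PR(1), rule_format, of a b] by auto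
        qed
        show "card {T\<in>Q. x \<in> T} \<le> 1"
        proof (rule card_one_elem)
          show "finite {T\<in>Q. x \<in> T}" using fP by simp
          fix a b assume "a \<in> {T\<in>Q. x \<in> T}" "b \<in> {T\<in>Q. x \<in> T}"
          then show "a = b" using par(2)[OF PR(2), rule_format, of a b] by auto
        qed
      qed
      ultimately show ?thesis by simp
    qed
    obtain col where col: "\<forall>y. col y \<in> {1..7}"
      "\<forall>T\<in>E. \<forall>y\<in>T\<inter>Y. \<forall>z\<in>T\<inter>Y. y \<noteq> z \<longrightarrow> col y \<noteq> col z"
      "\<forall>T\<in>E. \<forall>y\<in>T\<inter>Y. \<forall>z\<in>T\<inter>Y. \<forall>u\<in>T\<inter>Y. y \<noteq> z \<longrightarrow> u \<noteq> y \<longrightarrow> u \<noteq> z \<longrightarrow> col u \<noteq> xr (col y) (col z)"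
      using greedy[OF E3 deg fE fY] by blast
    have "goodT col T" if T: "T \<in> E" for T
    proof (rule indep_good[OF E3[OF T]])
      have "T \<inter> Y = T" using T EB T3 by auto
      then show "indepT col T" unfolding indepT_def
        using col(1) col(2)[rule_format, OF T] col(3)[rule_format, OF T] by simp
    qed
    then show ?thesis unfolding E_def P_def Q_def by blast
  qed
  then have "\<forall>j. \<exists>col. 2*j+1 < card R \<longrightarrow> (\<forall>T\<in>e (2*j) \<union> e (2*j+1). goodT col T)" by blast
  then obtain col where "\<forall>j. 2*j+1 < card R \<longrightarrow> (\<forall>T\<in>e (2*j) \<union> e (2*j+1). goodT (col j) T)"
    using choice[of "\<lambda>j col. 2*j+1 < card R \<longrightarrow> (\<forall>T\<in>e (2*j) \<union> e (2*j+1). goodT col T)"] by blast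
  then show ?thesis using e evR R cP by blast
qed


lemma family:
  fixes Y :: "'i \<Rightarrow> nat set" and Bf :: "'i \<Rightarrow> nat set set"
  assumes KT: "\<And>i. i \<in> I \<Longrightarrow> is_KTS (Y i) (Bf i)" and Ycard: "\<And>i. i \<in> I \<Longrightarrow> card (Y i) = n"
    and n12: "n mod 12 = 9" and ND: "2 * N div 3 \<le> 2 * (n div 3)"
    and disj: "\<And>i j. i \<in> I \<Longrightarrow> j \<in> I \<Longrightarrow> i \<noteq> j \<Longrightarrow> Bf i \<inter> Bf j = {}"
    and cover: "(\<Union>i\<in>I. Bf i) = triples {..<N}"
  shows "\<exists>P. is_TOC 3 N 5 3 P"
proof -
  define KP where "KP = (\<lambda>i R e (col :: nat \<Rightarrow> nat \<Rightarrow> nat). bij_betw e {..<card R} R \<and> even (card R) \<and> \<Union>R = Bf i \<and>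
     (\<forall>P\<in>R. \<forall>Q\<in>R. P \<noteq> Q \<longrightarrow> P \<inter> Q = {}) \<and> (\<forall>P\<in>R. parallel_class (Y i) P \<and> card P = n div 3) \<and>
     (\<forall>j. 2*j+1 < card R \<longrightarrow> (\<forall>T\<in>e (2*j) \<union> e (2*j+1). goodT (col j) T)))"
  have "\<forall>i\<in>I. \<exists>t. KP i (fst t) (fst (snd t)) (snd (snd t))"
  proof
    fix i assume i: "i \<in> I"
    have "\<exists>R e col. KP i R e col" unfolding KP_def by (rule kts_struct[OF KT[OF i] Ycard[OF i] n12])
    then obtain R e col where "KP i R e col" by blast
    then show "\<exists>t. KP i (fst t) (fst (snd t)) (snd (snd t))" by (intro exI[of _ "(R, e, col)"]) simp
  qed
  from bchoice[OF this] obtain tf where tf: "\<forall>i\<in>I. KP i (fst (tf i)) (fst (snd (tf i))) (snd (snd (tf i)))"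
    by blast
  define Rf where "Rf = (\<lambda>i. fst (tf i))"
  define ef where "ef = (\<lambda>i. fst (snd (tf i)))"
  define cf where "cf = (\<lambda>i. snd (snd (tf i)))"
  have K: "KP i (Rf i) (ef i) (cf i)" if "i \<in> I" for i using tf that unfolding Rf_def ef_def cf_def by blast
  have Kbij: "bij_betw (ef i) {..<card (Rf i)} (Rf i)" and Kev: "even (card (Rf i))"
    and KU: "\<Union>(Rf i) = Bf i" and Kdisj: "\<forall>P\<in>Rf i. \<forall>Q\<in>Rf i. P \<noteq> Q \<longrightarrow> P \<inter> Q = {}"
    and Kpar: "\<forall>P\<in>Rf i. parallel_class (Y i) P \<and> card P = n div 3"
    and Kcol: "\<forall>j. 2*j+1 < card (Rf i) \<longrightarrow> (\<forall>T\<in>ef i (2*j) \<union> ef i (2*j+1). goodT (cf i j) T)"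
    if "i \<in> I" for i using K[OF that] unfolding KP_def by auto
  define tr where "tr = triples {..<N}"
  have ex1i: "\<exists>!i. i \<in> I \<and> T \<in> Bf i" if "T \<in> tr" for T
  proof -
    have "T \<in> (\<Union>i\<in>I. Bf i)" using that cover unfolding tr_def by simp
    then obtain i where i: "i \<in> I" "T \<in> Bf i" by blast
    have "j = i" if "j \<in> I \<and> T \<in> Bf j" for j
    proof (rule ccontr)
      assume "j \<noteq> i"
      then have "Bf j \<inter> Bf i = {}" using disj that i(1) by blast
      then show False using that i(2) by blast
    qed
    then show ?thesis using i by blast
  qed
  define \<iota> where "\<iota> = (\<lambda>T. THE i. i \<in> I \<and> T \<in> Bf i)"
  have F1: "\<iota> T \<in> I \<and> T \<in> Bf (\<iota> T)" if "T \<in> tr" for T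
    using theI'[OF ex1i[OF that]] unfolding \<iota>_def .
  have F1': "\<iota> T = i" if "T \<in> tr" "i \<in> I" "T \<in> Bf i" for T i
    unfolding \<iota>_def using ex1i[OF that(1)] that(2,3) by (intro the1_equality) auto
  have ex1P: "\<exists>!P. P \<in> Rf (\<iota> T) \<and> T \<in> P" if "T \<in> tr" for T
  proof -
    have i: "\<iota> T \<in> I" "T \<in> Bf (\<iota> T)" using F1[OF that] by auto
    have "T \<in> \<Union>(Rf (\<iota> T))" using KU[OF i(1)] i(2) by simp
    then obtain P where P: "P \<in> Rf (\<iota> T)" "T \<in> P" by blast
    have "Q = P" if "Q \<in> Rf (\<iota> T) \<and> T \<in> Q" for Q
    proof (rule ccontr)
      assume "Q \<noteq> P"
      then have "Q \<inter> P = {}" using Kdisj[OF i(1)] that P(1) by blast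
      then show False using that P(2) by blast
    qed
    then show ?thesis using P by blast
  qed
  define PT where "PT = (\<lambda>T. THE P. P \<in> Rf (\<iota> T) \<and> T \<in> P)"
  have F2: "PT T \<in> Rf (\<iota> T) \<and> T \<in> PT T" if "T \<in> tr" for T
    using theI'[OF ex1P[OF that]] unfolding PT_def .
  have F2': "PT T = P" if "T \<in> tr" "P \<in> Rf (\<iota> T)" "T \<in> P" for T P
    unfolding PT_def using ex1P[OF that(1)] that(2,3) by (intro the1_equality) auto
  define cT where "cT = (\<lambda>T. inv_into {..<card (Rf (\<iota> T))} (ef (\<iota> T)) (PT T))"
  have F3: "cT T < card (Rf (\<iota> T)) \<and> ef (\<iota> T) (cT T) = PT T" if "T \<in> tr" for T
  proof -
    have i: "\<iota> T \<in> I" using F1[OF that] by auto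
    have b: "bij_betw (ef (\<iota> T)) {..<card (Rf (\<iota> T))} (Rf (\<iota> T))" using Kbij[OF i] .
    have "cT T \<in> {..<card (Rf (\<iota> T))}" unfolding cT_def
      using bij_betw_inv_into[OF b] F2[OF that] unfolding bij_betw_def by auto
    moreover have "ef (\<iota> T) (cT T) = PT T" unfolding cT_def
      using bij_betw_inv_into_right[OF b] F2[OF that] by auto
    ultimately show ?thesis by simp
  qed
  have F3': "cT T = c" if "T \<in> tr" "c < card (Rf (\<iota> T))" "T \<in> ef (\<iota> T) c" for T c
  proof -
    have i: "\<iota> T \<in> I" using F1[OF that(1)] by auto
    have b: "bij_betw (ef (\<iota> T)) {..<card (Rf (\<iota> T))} (Rf (\<iota> T))" using Kbij[OF i] .
    have "ef (\<iota> T) c \<in> Rf (\<iota> T)" using b that(2) unfolding bij_betw_def by auto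
    then have "PT T = ef (\<iota> T) c" using F2'[OF that(1) _ that(3)] by simp
    then show ?thesis unfolding cT_def using bij_betw_inv_into_left[OF b] that(2) by simp
  qed
  define G where "G = (\<lambda>T. (\<iota> T, cT T div 2))"
  define s where "s = (\<lambda>T. even (cT T))"
  define col where "col = (\<lambda>(i, j). cf i j)"
  have trfin: "finite tr" unfolding tr_def triples_def
    by (rule finite_subset[of _ "Pow {..<N}"]) auto
  show ?thesis
  proof (rule core[where G=G and s=s and col=col and m="2 * (n div 3)"])
    fix T1 T2 assume T1: "T1 \<in> triples {..<N}" and T2: "T2 \<in> triples {..<N}" and ne: "T1 \<noteq> T2" and Gq: "G T1 = G T2"
    have i: "\<iota> T1 = \<iota> T2" using Gq unfolding G_def by simp
    define i where "i = \<iota> T1"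
    have T1t: "T1 \<in> tr" and T2t: "T2 \<in> tr" using T1 T2 unfolding tr_def by auto
    have a1: "\<iota> T1 \<in> I" "T1 \<in> Bf (\<iota> T1)" using F1[OF T1t] by auto
    have a2: "T2 \<in> Bf (\<iota> T2)" using F1[OF T2t] by auto
    have iI: "i \<in> I" "T1 \<in> Bf i" "T2 \<in> Bf i" using a1 a2 i unfolding i_def by simp_all
    have STS: "is_STS (Y i) (Bf i)" using KT[OF iI(1)] unfolding is_KTS_def by simp
    have sub: "T1 \<subseteq> Y i" "T2 \<subseteq> Y i" using STS iI unfolding is_STS_def triples_def by auto
    have fin: "finite (T1 \<inter> T2)" using T1 unfolding triples_def by (auto intro: finite_subset)
    show "card (T1 \<inter> T2) \<le> 1"
    proof (rule card_one_elem[OF fin])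
      fix a b assume a: "a \<in> T1 \<inter> T2" and b: "b \<in> T1 \<inter> T2"
      show "a = b"
      proof (rule ccontr)
        assume "a \<noteq> b"
        then have "\<exists>!T. T \<in> Bf i \<and> {a, b} \<subseteq> T" using STS a b sub unfolding is_STS_def by blast
        then show False using a b iI ne by blast
      qed
    qed
  next
    fix T1 T2 assume T1: "T1 \<in> triples {..<N}" and T2: "T2 \<in> triples {..<N}" and ne: "T1 \<noteq> T2"
      and Gq: "G T1 = G T2" and sq: "s T1 = s T2"
    have i: "\<iota> T1 = \<iota> T2" using Gq unfolding G_def by simp
    have "cT T1 div 2 = cT T2 div 2" using Gq unfolding G_def by simp
    moreover have "even (cT T1) = even (cT T2)" using sq unfolding s_def by simp
    ultimately have c: "cT T1 = cT T2" by presburger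
    have T1t: "T1 \<in> tr" and T2t: "T2 \<in> tr" using T1 T2 unfolding tr_def by auto
    have PP: "PT T1 = PT T2" using F3[OF T1t] F3[OF T2t] c i by simp
    have m: "PT T1 \<in> Rf (\<iota> T1)" "T1 \<in> PT T1" "T2 \<in> PT T2" using F2 T1t T2t by auto
    have iI: "\<iota> T1 \<in> I" using F1 T1t by auto
    have "parallel_class (Y (\<iota> T1)) (PT T1)" using Kpar[OF iI] m(1) by blast
    then have "\<forall>S\<in>PT T1. \<forall>T\<in>PT T1. S \<noteq> T \<longrightarrow> S \<inter> T = {}" unfolding parallel_class_def by blast
    then show "T1 \<inter> T2 = {}" using m PP ne by blast
  next
    fix T assume T: "T \<in> triples {..<N}"
    then have Ttr: "T \<in> tr" unfolding tr_def .
    define i where "i = \<iota> T"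
    define j where "j = cT T div 2"
    have iI: "i \<in> I" using F1[OF Ttr] i_def by simp
    have c: "cT T < card (Rf i)" "ef i (cT T) = PT T" using F3[OF Ttr] i_def by auto
    have j1: "2*j+1 < card (Rf i)" using c(1) Kev[OF iI] unfolding j_def
      by presburger
    have Tin: "T \<in> ef i (2*j) \<union> ef i (2*j+1)"
    proof -
      have "cT T = 2*j \<or> cT T = 2*j+1" unfolding j_def by presburger
      then show ?thesis using c(2) F2[OF Ttr] i_def by auto
    qed
    have "col (G T) = cf i j" unfolding col_def G_def i_def j_def by simp
    then show "goodT (col (G T)) T" using Kcol[OF iI] j1 Tin by simp
  next
    fix T assume T: "T \<in> triples {..<N}"
    then have Ttr: "T \<in> tr" unfolding tr_def .
    define i where "i = \<iota> T"
    define j where "j = cT T div 2"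
    have iI: "i \<in> I" using F1[OF Ttr] i_def by simp
    have c: "cT T < card (Rf i)" using F3[OF Ttr] i_def by auto
    have j1: "2*j+1 < card (Rf i)" using c(1) Kev[OF iI] unfolding j_def
      by presburger
    have b: "bij_betw (ef i) {..<card (Rf i)} (Rf i)" using Kbij[OF iI] .
    have inR: "ef i c' \<in> Rf i" if "c' < card (Rf i)" for c' using b that unfolding bij_betw_def by auto
    have memG: "T' \<in> tr \<and> G T' = G T" if c': "c' < card (Rf i)" "c' div 2 = j" "T' \<in> ef i c'" for T' c'
    proof -
      have "T' \<in> \<Union>(Rf i)" using inR[OF c'(1)] c'(3) by blast
      then have "T' \<in> Bf i" using KU[OF iI] by simp
      then have "T' \<in> (\<Union>i\<in>I. Bf i)" using iI by blast
      then have T'tr: "T' \<in> tr" using cover unfolding tr_def by simp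
      have "\<iota> T' = i" using F1'[OF T'tr iI \<open>T' \<in> Bf i\<close>] .
      then have "cT T' = c'" using F3'[OF T'tr] c' by simp
      then show ?thesis using T'tr \<open>\<iota> T' = i\<close> c'(2) unfolding G_def i_def j_def by simp
    qed
    have sub: "ef i (2*j) \<union> ef i (2*j+1) \<subseteq> {T'\<in>triples {..<N}. G T' = G T}"
      using memG[of "2*j"] memG[of "2*j+1"] j1 unfolding tr_def by auto
    have fins: "finite (ef i (2*j))" "finite (ef i (2*j+1))"
    proof -
      have fsub: "finite {T'\<in>triples {..<N}. G T' = G T}" using trfin unfolding tr_def by simp
      have "finite (ef i (2*j) \<union> ef i (2*j+1))" using finite_subset[OF sub fsub] .
      then show "finite (ef i (2*j))" "finite (ef i (2*j+1))" by auto
    qed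
    have dsj: "ef i (2*j) \<inter> ef i (2*j+1) = {}"
    proof -
      have "ef i (2*j) \<noteq> ef i (2*j+1)"
      proof
        assume eq: "ef i (2*j) = ef i (2*j+1)"
        have inj: "inj_on (ef i) {..<card (Rf i)}" using b unfolding bij_betw_def by simp
        have "2*j = 2*j+1" using inj_onD[OF inj eq] j1 by simp
        then show False by simp
      qed
      then show ?thesis using Kdisj[OF iI] inR j1 by auto
    qed
    have "card (ef i (2*j) \<union> ef i (2*j+1)) = card (ef i (2*j)) + card (ef i (2*j+1))"
      using card_Un_disjoint[OF fins dsj] .
    also have "\<dots> = 2 * (n div 3)" using Kpar[OF iI] inR j1 by simp
    finally have "2 * (n div 3) = card (ef i (2*j) \<union> ef i (2*j+1))" by simp
    also have "\<dots> \<le> card {T'\<in>triples {..<N}. G T' = G T}"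
      using sub trfin unfolding tr_def by (intro card_mono) auto
    finally show "2 * (n div 3) \<le> card {T'\<in>triples {..<N}. G T' = G T}" .
  next
    show "2 * N div 3 \<le> 2 * (n div 3)" by (rule ND)
  qed
qed


lemma triples_image:
  assumes inj: "inj_on f X"
  shows "triples (f ` X) = (`) f ` triples X"
proof
  show "(`) f ` triples X \<subseteq> triples (f ` X)"
  proof
    fix S assume "S \<in> (`) f ` triples X"
    then obtain T where T: "T \<subseteq> X" "card T = 3" "S = f ` T" unfolding triples_def by auto
    have "card (f ` T) = card T" using card_image[OF inj_on_subset[OF inj T(1)]] .
    then show "S \<in> triples (f ` X)" using T unfolding triples_def by auto
  qed
  show "triples (f ` X) \<subseteq> (`) f ` triples X"
  proof
    fix S assume S: "S \<in> triples (f ` X)"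
    define T where "T = {x\<in>X. f x \<in> S}"
    have ST: "S = f ` T" using S unfolding T_def triples_def by auto
    have "T \<subseteq> X" unfolding T_def by auto
    moreover have "card T = 3"
      using S card_image[OF inj_on_subset[OF inj \<open>T \<subseteq> X\<close>]] ST unfolding triples_def by simp
    ultimately show "S \<in> (`) f ` triples X" using ST unfolding triples_def by auto
  qed
qed

lemma img_disj:
  assumes inj: "inj_on f X" and "B1 \<subseteq> Pow X" "B2 \<subseteq> Pow X" "B1 \<inter> B2 = {}"
  shows "((`) f ` B1) \<inter> ((`) f ` B2) = {}"
proof (rule ccontr)
  assume "((`) f ` B1) \<inter> ((`) f ` B2) \<noteq> {}"
  then obtain T1 T2 where T: "T1 \<in> B1" "T2 \<in> B2" "f ` T1 = f ` T2" by auto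
  have sub: "T1 \<subseteq> X" "T2 \<subseteq> X" using T(1,2) assms(2,3) by auto
  have "T1 = T2" using inj_on_image_eq_iff[OF inj sub] T(3) by simp
  then have "T1 \<in> B1 \<inter> B2" using T(1,2) by simp
  then show False using assms(4) by simp
qed

lemma kts_image:
  assumes inj: "inj_on f X" and K: "is_KTS X B"
  shows "is_KTS (f ` X) ((`) f ` B)"
proof -
  have S: "finite X" "B \<subseteq> triples X" "\<And>x y. x \<in> X \<Longrightarrow> y \<in> X \<Longrightarrow> x \<noteq> y \<Longrightarrow> \<exists>!T. T \<in> B \<and> {x, y} \<subseteq> T"
    using K unfolding is_KTS_def is_STS_def by auto
  have BX: "B \<subseteq> Pow X" using S(2) unfolding triples_def by auto
  obtain R where R: "\<Union>R = B" "\<forall>P\<in>R. \<forall>Q\<in>R. P \<noteq> Q \<longrightarrow> P \<inter> Q = {}" "\<forall>P\<in>R. parallel_class X P"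
  proof -
    have "\<exists>R. \<Union>R = B \<and> (\<forall>P\<in>R. \<forall>Q\<in>R. P \<noteq> Q \<longrightarrow> P \<inter> Q = {}) \<and> (\<forall>P\<in>R. parallel_class X P)"
      using K unfolding is_KTS_def by (rule conjunct2)
    then show ?thesis using that by blast
  qed
  have sts: "is_STS (f ` X) ((`) f ` B)" unfolding is_STS_def
  proof (intro conjI ballI impI)
    show "finite (f ` X)" using S(1) by simp
    show "(`) f ` B \<subseteq> triples (f ` X)" using S(2) triples_image[OF inj] by auto
    fix x' y' assume x': "x' \<in> f ` X" and y': "y' \<in> f ` X" and ne: "x' \<noteq> y'"
    obtain x y where xy: "x \<in> X" "y \<in> X" "x' = f x" "y' = f y" using x' y' by auto
    have "x \<noteq> y" using ne xy by auto
    then obtain T where T: "T \<in> B" "{x, y} \<subseteq> T" "\<And>T'. T' \<in> B \<Longrightarrow> {x, y} \<subseteq> T' \<Longrightarrow> T' = T"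
      using S(3)[OF xy(1,2)] by metis
    show "\<exists>!T. T \<in> (`) f ` B \<and> {x', y'} \<subseteq> T"
    proof (rule ex1I[of _ "f ` T"])
      show "f ` T \<in> (`) f ` B \<and> {x', y'} \<subseteq> f ` T" using T(1,2) xy by auto
      fix S' assume S': "S' \<in> (`) f ` B \<and> {x', y'} \<subseteq> S'"
      have "S' \<in> (`) f ` B" using S' by simp
      then obtain T' where T': "T' \<in> B" "S' = f ` T'" by (rule imageE) simp
      have "T' \<subseteq> X" using T' BX by auto
      have "f x \<in> f ` T'" "f y \<in> f ` T'" using S' T' xy by auto
      then have "x \<in> T'" "y \<in> T'" using inj_on_image_mem_iff[OF inj xy(1) \<open>T' \<subseteq> X\<close>]
          inj_on_image_mem_iff[OF inj xy(2) \<open>T' \<subseteq> X\<close>] by auto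
      then have "T' = T" using T(3)[OF T'(1)] by auto
      then show "S' = f ` T" using T' by simp
    qed
  qed
  define R' where "R' = (\<lambda>P. (`) f ` P) ` R"
  have PB: "P \<subseteq> B" if "P \<in> R" for P using that R(1) by auto
  have "\<Union>R' = (`) f ` B" unfolding R'_def using R(1) by auto
  moreover have "\<forall>P'\<in>R'. \<forall>Q'\<in>R'. P' \<noteq> Q' \<longrightarrow> P' \<inter> Q' = {}"
  proof (intro ballI impI)
    fix P' Q' assume P'R: "P' \<in> R'" and Q'R: "Q' \<in> R'" and ne: "P' \<noteq> Q'"
    obtain P where P: "P \<in> R" "P' = (`) f ` P" using P'R unfolding R'_def by (rule imageE) simp
    obtain Q where Q: "Q \<in> R" "Q' = (`) f ` Q" using Q'R unfolding R'_def by (rule imageE) simp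
    have "P \<noteq> Q" using ne P(2) Q(2) by auto
    then have PQd: "P \<inter> Q = {}" using R(2) P(1) Q(1) by blast
    have "P \<subseteq> Pow X" "Q \<subseteq> Pow X" using PB[OF P(1)] PB[OF Q(1)] BX by blast+
    then show "P' \<inter> Q' = {}" unfolding P(2) Q(2) using img_disj[OF inj _ _ PQd] by blast
  qed
  moreover have "\<forall>P'\<in>R'. parallel_class (f ` X) P'"
  proof
    fix P' assume "P' \<in> R'"
    then obtain P where P: "P \<in> R" "P' = (`) f ` P" unfolding R'_def by (rule imageE) simp
    have pcP: "parallel_class X P" using R(3) P(1) by blast
    have pc1: "\<Union>P = X" using pcP unfolding parallel_class_def by simp
    have pc2: "\<forall>S\<in>P. \<forall>T\<in>P. S \<noteq> T \<longrightarrow> S \<inter> T = {}" using pcP unfolding parallel_class_def by simp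
    note pc = pc1 pc2
    have PX: "\<And>T. T \<in> P \<Longrightarrow> T \<subseteq> X" using PB[OF P(1)] BX by auto
    show "parallel_class (f ` X) P'" unfolding parallel_class_def
    proof (intro conjI ballI impI)
      have "\<Union>((`) f ` P) = f ` (\<Union>P)" by blast
      then show "\<Union>P' = f ` X" unfolding P(2) using pc(1) by simp
      fix S' T' assume S'P: "S' \<in> P'" and T'P: "T' \<in> P'" and ne: "S' \<noteq> T'"
      obtain S where S: "S \<in> P" "S' = f ` S" using S'P unfolding P(2) by (rule imageE) simp
      obtain T where T: "T \<in> P" "T' = f ` T" using T'P unfolding P(2) by (rule imageE) simp
      have ST: "S \<in> P" "T \<in> P" "S' = f ` S" "T' = f ` T" "S \<noteq> T" using S T ne by auto
      have "S \<inter> T = {}" using pc(2) ST by auto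
      then show "S' \<inter> T' = {}" using inj_on_image_Int[OF inj PX[OF ST(1)] PX[OF ST(2)]] ST by simp
    qed
  qed
  ultimately have "\<exists>R. \<Union>R = (`) f ` B \<and> (\<forall>P\<in>R. \<forall>Q\<in>R. P \<noteq> Q \<longrightarrow> P \<inter> Q = {}) \<and>
          (\<forall>P\<in>R. parallel_class (f ` X) P)" by (intro exI[of _ R'] conjI)
  with sts show ?thesis unfolding is_KTS_def by (rule conjI)
qed

lemma part1:
  assumes n12: "n mod 12 = 9" and L: "exists_LKTS n"
  shows "\<exists>P. is_TOC 3 n 5 3 P"
proof -
  obtain X :: "nat set" and L :: "nat set set set" where X: "finite X" "card X = n" "\<Union>L = triples X"
    "\<forall>B\<in>L. \<forall>B'\<in>L. B \<noteq> B' \<longrightarrow> B \<inter> B' = {}" "\<forall>B\<in>L. is_KTS X B"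
    using L unfolding exists_LKTS_def apply (elim exE conjE) apply (rule that) apply assumption+ done
  obtain f where f: "bij_betw f X {0..<card X}" using ex_bij_betw_finite_nat[OF X(1)] by blast
  have inj: "inj_on f X" and fX: "f ` X = {..<n}" using f X(2) unfolding bij_betw_def by auto
  have BX: "B \<subseteq> Pow X" if "B \<in> L" for B using that X(3) unfolding triples_def by auto
  show ?thesis
  proof (rule family[where I="(\<lambda>B. (`) f ` B) ` L" and Y="\<lambda>_. {..<n}" and Bf="\<lambda>B. B" and n=n])
    fix B' assume "B' \<in> (\<lambda>B. (`) f ` B) ` L"
    then obtain B where B: "B \<in> L" "B' = (`) f ` B" by (rule imageE) simp
    have "is_KTS (f ` X) ((`) f ` B)" using kts_image[OF inj] B(1) X(5) by blast
    then show "is_KTS {..<n} B'" using B(2) fX by simp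
  next
    show "card {..<n} = n" for B' :: "nat set set" by simp
  next
    show "n mod 12 = 9" by fact
  next
    show "2 * n div 3 \<le> 2 * (n div 3)" using n12 by presburger
  next
    fix B1' B2' assume b1: "B1' \<in> (\<lambda>B. (`) f ` B) ` L" and b2: "B2' \<in> (\<lambda>B. (`) f ` B) ` L" and ne: "B1' \<noteq> B2'"
    obtain B1 where B1: "B1 \<in> L" "B1' = (`) f ` B1" using b1 by (rule imageE) simp
    obtain B2 where B2: "B2 \<in> L" "B2' = (`) f ` B2" using b2 by (rule imageE) simp
    have "B1 \<noteq> B2" using ne B1 B2 by auto
    then have d: "B1 \<inter> B2 = {}" using X(4) B1(1) B2(1) by blast
    show "B1' \<inter> B2' = {}" unfolding B1(2) B2(2)
      by (rule img_disj[OF inj BX[OF B1(1)] BX[OF B2(1)] d])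
  next
    have "(\<Union>B'\<in>(\<lambda>B. (`) f ` B) ` L. B') = (`) f ` (\<Union>L)" unfolding image_Union by simp
    also have "\<dots> = triples (f ` X)" using X(3) triples_image[OF inj] by simp
    finally show "(\<Union>B'\<in>(\<lambda>B. (`) f ` B) ` L. B') = triples {..<n}" using fX by simp
  qed
qed

lemma part2:
  assumes n12: "n mod 12 = 9" and L: "exists_OLKTS n"
  shows "\<exists>P. is_TOC 3 (n + 1) 5 3 P"
proof -
  obtain X and \<B> :: "nat \<Rightarrow> nat set set" where X: "finite X" "card X = n + 1" "(\<Union>x\<in>X. \<B> x) = triples X"
    "\<forall>x\<in>X. \<forall>y\<in>X. x \<noteq> y \<longrightarrow> \<B> x \<inter> \<B> y = {}" "\<forall>x\<in>X. is_KTS (X - {x}) (\<B> x)"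
    using L unfolding exists_OLKTS_def apply (elim exE conjE) apply (rule that) apply assumption+ done
  obtain f where f: "bij_betw f X {0..<card X}" using ex_bij_betw_finite_nat[OF X(1)] by blast
  have inj: "inj_on f X" and fX: "f ` X = {..<n+1}" using f X(2) unfolding bij_betw_def by auto
  have fb: "bij_betw f X {..<n+1}" using f X(2) by (simp add: lessThan_atLeast0)
  define g where "g = inv_into X f"
  have gX: "g y \<in> X" if "y < n + 1" for y using that fX unfolding g_def by (metis inv_into_into lessThan_iff)
  have fg: "f (g y) = y" if "y < n + 1" for y using that bij_betw_inv_into_right[OF fb] unfolding g_def by simp
  have BX: "\<B> x \<subseteq> Pow X" if "x \<in> X" for x using that X(3) unfolding triples_def by auto
  show ?thesis
  proof (rule family[where I="{..<n+1}" and Y="\<lambda>y. {..<n+1} - {y}" and Bf="\<lambda>y. (`) f ` \<B> (g y)" and n=n])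
    fix y assume y: "y \<in> {..<n+1}"
    have yl: "y < n + 1" using y by simp
    have "f ` (X - {g y}) = f ` X - f ` {g y}"
      by (rule inj_on_image_set_diff[OF inj]) (use gX[OF yl] in auto)
    then have e: "f ` (X - {g y}) = {..<n+1} - {y}" using fX fg[OF yl] by simp
    have inj': "inj_on f (X - {g y})" using inj by (rule inj_on_subset) auto
    have "is_KTS (X - {g y}) (\<B> (g y))" using X(5) gX[OF yl] by blast
    then have "is_KTS (f ` (X - {g y})) ((`) f ` \<B> (g y))" by (rule kts_image[OF inj'])
    then show "is_KTS ({..<n+1} - {y}) ((`) f ` \<B> (g y))" using e by simp
  next
    fix y assume "y \<in> {..<n+1}"
    then show "card ({..<n+1} - {y}) = n" by simp
  next
    show "n mod 12 = 9" by fact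
  next
    show "2 * (n + 1) div 3 \<le> 2 * (n div 3)" using n12 by presburger
  next
    fix y1 y2 assume y: "y1 \<in> {..<n+1}" "y2 \<in> {..<n+1}" "y1 \<noteq> y2"
    have "g y1 \<noteq> g y2" using fg y by (metis lessThan_iff)
    then have "\<B> (g y1) \<inter> \<B> (g y2) = {}" using X(4) gX y by auto
    then show "(`) f ` \<B> (g y1) \<inter> (`) f ` \<B> (g y2) = {}"
      by (intro img_disj[OF inj]) (use BX gX y in auto)
  next
    have gim: "g ` {..<n+1} = X" using bij_betw_inv_into[OF fb] unfolding g_def bij_betw_def by simp
    have "(\<Union>y\<in>{..<n+1}. (`) f ` \<B> (g y)) = (`) f ` (\<Union>y\<in>{..<n+1}. \<B> (g y))" by (simp add: image_UN)
    also have "(\<Union>y\<in>{..<n+1}. \<B> (g y)) = (\<Union>x\<in>X. \<B> x)" using gim by auto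
    also have "(`) f ` (\<Union>x\<in>X. \<B> x) = triples (f ` X)" using X(3) triples_image[OF inj] by simp
    finally show "(\<Union>y\<in>{..<n+1}. (`) f ` \<B> (g y)) = triples {..<n+1}" using fX by simp
  qed
qed

theorem corollary4p10:
  fixes n :: nat
  assumes "n mod 12 = 9"
  shows "(exists_LKTS n \<longrightarrow> (\<exists>P. is_TOC 3 n 5 3 P)) \<and>
         (exists_OLKTS n \<longrightarrow> (\<exists>P. is_TOC 3 (n + 1) 5 3 P))"
  using part1[OF assms] part2[OF assms] by blast


end
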